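(* Suppose $t=t(n)=\alpha_0(n)+O(1)$ is an integer. Then, uniformly over all $n$ and all real $\rho\ge2$ with $t-\rho=\Theta(1)$, \[ y_t(\rho)=2\log n-\log\log n+O(1). \]
   Context: $\alpha_0(n)=2\log_2 n-2\log_2\log_2 n+2\log_2(e/2)+1$. $d_i=2^{\binom i2}i!$. For positive integer $t$ and real $1<\rho<t$, $x_t(\rho),y_t(\rho)$ are the unique reals $x,y$ with $\sum_{i=1}^t e^{x+iy}d_i^{-1}=1$ and $\sum_{i=1}^t ie^{x+iy}d_i^{-1}=\rho$. Logarithms are natural. *)

theory Defs
  imports "HOL-Analysis.Analysis"
begin

definition alpha0 :: "nat \<Rightarrow> real" where
  "alpha0 n = 2 * log 2 (real n) - 2 * log 2 (log 2 (real n)) + 2 * log 2 (exp 1 / 2) + 1"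

definition dd :: "nat \<Rightarrow> real" where
  "dd i = 2 ^ (i choose 2) * fact i"

definition xy :: "nat \<Rightarrow> real \<Rightarrow> real \<times> real" where
  "xy t \<rho> = (THE p. (\<Sum>i=1..t. exp (fst p + real i * snd p) / dd i) = 1
                  \<and> (\<Sum>i=1..t. real i * exp (fst p + real i * snd p) / dd i) = \<rho>)"

definition x_t :: "nat \<Rightarrow> real \<Rightarrow> real" where "x_t t \<rho> = fst (xy t \<rho>)"
definition y_t :: "nat \<Rightarrow> real \<Rightarrow> real" where "y_t t \<rho> = snd (xy t \<rho>)"

end

theory Submission
  imports Defs "HOL-Real_Asymp.Real_Asymp"
begin


definition Wt :: "real \<Rightarrow> nat \<Rightarrow> real" where
  "Wt y i = exp (real i * y) / dd i"

lemma dd_ge1: "dd i \<ge> 1"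
  unfolding dd_def
proof -
  have "(1::real) \<le> 2 ^ (i choose 2)" by simp
  moreover have "(1::real) \<le> fact i" by simp
  ultimately show "1 \<le> (2::real) ^ (i choose 2) * fact i"
    using mult_mono[of 1 "(2::real) ^ (i choose 2)" 1 "fact i"] by simp
qed

lemma dd_pos: "dd i > 0" using dd_ge1[of i] by linarith

lemma dd_1: "dd (Suc 0) = 1" by (simp add: dd_def numeral_2_eq_2)

lemma dd_Suc: "dd (Suc i) = dd i * 2 ^ i * (real i + 1)"
proof -
  have "Suc i choose 2 = (i choose 2) + i"
    by (simp add: numeral_2_eq_2 add.commute)
  then show ?thesis unfolding dd_def by (simp add: power_add algebra_simps)
qed

lemma Wt_pos: "Wt y i > 0" unfolding Wt_def using dd_pos by simp

lemma Wt_Suc: "Wt y (Suc i) = Wt y i * (exp y / (2 ^ i * (real i + 1)))"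
  unfolding Wt_def dd_Suc using dd_pos[of i]
  by (simp add: field_simps exp_add[symmetric] distrib_right)

lemma Wt_1: "Wt y (Suc 0) = exp y" by (simp add: Wt_def dd_1)

lemma Wt_prod: "Wt a i * Wt b j = exp (real i * a + real j * b) / (dd i * dd j)"
  unfolding Wt_def by (simp add: exp_add)

lemma sgn_exp_nn:
  fixes A B u v :: real
  assumes "A - B = u * v" "v > 0"
  shows "u * (exp A - exp B) \<ge> 0"
proof (cases "u \<ge> 0")
  case True
  then have "u * v \<ge> 0" using assms(2) by (intro mult_nonneg_nonneg) auto
  then have "A \<ge> B" using assms by linarith
  then show ?thesis using True by simp
next
  case False
  then have "u * v \<le> 0" using assms by (simp add: mult_nonpos_nonneg)
  then have "A \<le> B" using assms by linarith
  then show ?thesis using False by (simp add: mult_nonpos_nonpos)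
qed

lemma cross_pos:
  assumes "2 \<le> t" "y < y'"
  shows "(\<Sum>j=1..t. real j * Wt y j) * (\<Sum>i=1..t. Wt y' i)
       < (\<Sum>i=1..t. real i * Wt y' i) * (\<Sum>j=1..t. Wt y j)"
proof -
  define T where "T = (\<lambda>i j. (real i - real j) * (Wt y' i * Wt y j - Wt y' j * Wt y i))"
  have T_alt: "T i j = ((real i - real j) * (exp (real i * y' + real j * y) - exp (real j * y' + real i * y)))
      / (dd i * dd j)" for i j
    unfolding T_def Wt_prod by (simp add: diff_divide_distrib[symmetric] mult.commute[of "dd j" "dd i"])
  have T_nn: "T i j \<ge> 0" for i j
  proof -
    have "(real i - real j) * (exp (real i * y' + real j * y) - exp (real j * y' + real i * y)) \<ge> 0"
      by (rule sgn_exp_nn[where v="y' - y"]) (use assms in \<open>auto simp: algebra_simps\<close>)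
    then show ?thesis unfolding T_alt using dd_pos[of i] dd_pos[of j] by simp
  qed
  have T_pos: "T 2 1 > 0"
  proof -
    have "exp (1 * y + 2 * y') > exp (2 * y + 1 * y')" using assms by simp
    then have "(real 2 - real 1) * (exp (real 2 * y' + real 1 * y) - exp (real 1 * y' + real 2 * y)) > 0"
      by (simp add: add.commute)
    then show ?thesis unfolding T_alt using dd_pos[of 2] dd_pos[of 1] by simp
  qed
  have pos: "(\<Sum>i=1..t. \<Sum>j=1..t. T i j) > 0"
  proof (rule sum_pos2[where i=2])
    show "0 < (\<Sum>j=1..t. T 2 j)"
      by (rule sum_pos2[where i=1]) (use assms T_pos T_nn in auto)
    show "0 \<le> (\<Sum>j=1..t. T i j)" for i using T_nn by (simp add: sum_nonneg)
  qed (use assms in auto)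
  define F where "F = (\<lambda>i j. (real i - real j) * (Wt y' i * Wt y j))"
  have e1: "(\<Sum>i=1..t. \<Sum>j=1..t. T i j) = (\<Sum>i=1..t. \<Sum>j=1..t. F i j) + (\<Sum>i=1..t. \<Sum>j=1..t. F j i)"
  proof -
    have "T i j = F i j + F j i" for i j unfolding T_def F_def by (simp add: algebra_simps)
    then show ?thesis by (simp add: sum.distrib)
  qed
  have e2: "(\<Sum>i=1..t. \<Sum>j=1..t. F j i) = (\<Sum>i=1..t. \<Sum>j=1..t. F i j)"
    by (rule sum.swap)
  have e3: "(\<Sum>i=1..t. \<Sum>j=1..t. F i j) = (\<Sum>i=1..t. real i * Wt y' i) * (\<Sum>j=1..t. Wt y j)
      - (\<Sum>j=1..t. real j * Wt y j) * (\<Sum>i=1..t. Wt y' i)"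
    unfolding F_def sum_product
    by (subst (2) sum.swap) (simp add: sum_subtractf[symmetric] algebra_simps)
  show ?thesis using pos unfolding e1 e2 e3 by linarith
qed

definition Pxy :: "nat \<Rightarrow> real \<Rightarrow> real \<times> real \<Rightarrow> bool" where
  "Pxy t \<rho> p \<longleftrightarrow> (\<Sum>i=1..t. exp (fst p + real i * snd p) / dd i) = 1
                  \<and> (\<Sum>i=1..t. real i * exp (fst p + real i * snd p) / dd i) = \<rho>"

lemma Pxy_iff: "Pxy t \<rho> (x, y) \<longleftrightarrow>
   exp x * (\<Sum>i=1..t. Wt y i) = 1 \<and> exp x * (\<Sum>i=1..t. real i * Wt y i) = \<rho>"
proof -
  have "(\<Sum>i=1..t. exp (x + real i * y) / dd i) = exp x * (\<Sum>i=1..t. Wt y i)"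
    by (simp add: sum_distrib_left Wt_def exp_add)
  moreover have "(\<Sum>i=1..t. real i * exp (x + real i * y) / dd i) = exp x * (\<Sum>i=1..t. real i * Wt y i)"
    unfolding sum_distrib_left by (rule sum.cong) (auto simp: Wt_def exp_add)
  ultimately show ?thesis unfolding Pxy_def by simp
qed

lemma key_split: fixes t :: nat and \<rho> y :: real shows "(\<Sum>i=1..t. (real i - \<rho>) * Wt y i) = (\<Sum>i=1..t. real i * Wt y i) - \<rho> * (\<Sum>i=1..t. Wt y i)"
  by (simp add: left_diff_distrib sum_subtractf sum_distrib_left)

lemma Pxy_key: "Pxy t \<rho> (x, y) \<Longrightarrow> (\<Sum>i=1..t. (real i - \<rho>) * Wt y i) = 0"
proof -
  assume "Pxy t \<rho> (x, y)"
  then have a: "exp x * (\<Sum>i=1..t. Wt y i) = 1" and b: "exp x * (\<Sum>i=1..t. real i * Wt y i) = \<rho>"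
    by (auto simp: Pxy_iff)
  have "exp x * (\<Sum>i=1..t. real i * Wt y i) = exp x * (\<rho> * (\<Sum>i=1..t. Wt y i))"
    using a b by (simp add: algebra_simps)
  then have "(\<Sum>i=1..t. real i * Wt y i) = \<rho> * (\<Sum>i=1..t. Wt y i)" by simp
  then show ?thesis using key_split[of \<rho> _ t] by simp
qed

lemma key_Pxy:
  assumes "(\<Sum>i=1..t. (real i - \<rho>) * Wt y i) = 0" "t \<ge> 1"
  shows "Pxy t \<rho> (- ln (\<Sum>i=1..t. Wt y i), y)"
proof -
  have S: "(\<Sum>i=1..t. Wt y i) > 0" by (rule sum_pos2[where i=1]) (use assms Wt_pos less_imp_le in auto)
  have M: "(\<Sum>i=1..t. real i * Wt y i) = \<rho> * (\<Sum>i=1..t. Wt y i)" using assms using key_split[of \<rho> _ t] by simp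
  show ?thesis unfolding Pxy_iff M using S by (simp add: exp_minus field_simps)
qed

lemma Wt_le_exp: "Wt y i \<le> exp (real i * y)"
  unfolding Wt_def using dd_ge1[of i] by (simp add: divide_le_eq mult_le_cancel_left1 less_le_trans[OF zero_less_one])

lemma key_exists:
  assumes t: "2 \<le> t" and r: "1 < \<rho>" "\<rho> < real t"
  shows "\<exists>y. (\<Sum>i=1..t. (real i - \<rho>) * Wt y i) = 0"
proof -
  define g where "g = (\<lambda>y. \<Sum>i=1..t. (real i - \<rho>) * Wt y i)"
  have cont: "continuous_on {a..b} g" for a b
    unfolding g_def Wt_def by (intro continuous_intros) (use dd_pos in \<open>auto simp: less_imp_neq[symmetric]\<close>)
  define y0 where "y0 = ln ((\<rho> - 1) / (2 * real t ^ 2))"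
  have e0: "exp y0 = (\<rho> - 1) / (2 * real t ^ 2)" unfolding y0_def using r t by simp
  have "(\<rho> - 1) / (2 * real t ^ 2) \<le> 1"
  proof -
    have "real t \<le> real t ^ 2" using t by (simp add: power2_eq_square)
    then have h: "\<rho> - 1 \<le> 2 * real t ^ 2" using r by linarith
    show ?thesis using h t by (simp add: divide_le_eq)
  qed
  then have y0n: "y0 \<le> 0" using e0 by (metis exp_le_one_iff)
  have g0: "g y0 \<le> 0"
  proof -
    have "g y0 = (1 - \<rho>) * Wt y0 1 + (\<Sum>i=2..t. (real i - \<rho>) * Wt y0 i)"
      unfolding g_def using t by (subst sum.atLeast_Suc_atMost) (auto simp: numeral_2_eq_2)
    also have "(\<Sum>i=2..t. (real i - \<rho>) * Wt y0 i) \<le> (\<Sum>i=2..t. real t * exp (2 * y0))"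
    proof (rule sum_mono)
      fix i assume i: "i \<in> {2..t}"
      show "(real i - \<rho>) * Wt y0 i \<le> real t * exp (2 * y0)"
      proof (cases "real i - \<rho> \<le> 0")
        case True then show ?thesis using Wt_pos[of y0 i] by (smt (verit) exp_gt_zero mult_nonneg_nonneg mult_nonpos_nonneg of_nat_0_le_iff)
      next
        case False
        have "real i * y0 \<le> 2 * y0" using i y0n by (intro mult_right_mono_neg) auto
        then have "Wt y0 i \<le> exp (2 * y0)" using Wt_le_exp[of y0 i] by (smt (verit) exp_le_cancel_iff)
        moreover have "real i - \<rho> \<le> real t" using i r by auto
        ultimately show ?thesis using False Wt_pos[of y0 i] by (intro mult_mono) auto
      qed
    qed
    also have "(\<Sum>i=2..t. real t * exp (2 * y0)) \<le> real t ^ 2 * exp (2 * y0)"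
      using t by (simp add: power2_eq_square mult_right_mono)
    finally have "g y0 \<le> (1 - \<rho>) * exp y0 + real t ^ 2 * exp (2 * y0)" by (simp add: Wt_1)
    also have "\<dots> = exp y0 * ((1 - \<rho>) + real t ^ 2 * exp y0)"
      by (simp add: algebra_simps exp_add[symmetric] mult_2)
    also have "\<dots> = exp y0 * ((1 - \<rho>) / 2)" unfolding e0 using t by (simp add: field_simps)
    also have "\<dots> \<le> 0" using r by (simp add: mult_nonneg_nonpos)
    finally show ?thesis .
  qed
  define y1 where "y1 = ln (1 + real t * \<rho> * dd t / (real t - \<rho>))"
  have pos1: "real t * \<rho> * dd t / (real t - \<rho>) > 0" using r t dd_pos[of t] by simp
  have e1: "exp y1 = 1 + real t * \<rho> * dd t / (real t - \<rho>)" unfolding y1_def using pos1 by simp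
  have y1p: "y1 \<ge> 0" unfolding y1_def using pos1 by simp
  obtain m where m: "t = Suc m" using t by (cases t) auto
  have g1: "g y1 \<ge> 0"
  proof -
    have "g y1 = (\<Sum>i=1..m. (real i - \<rho>) * Wt y1 i) + (real t - \<rho>) * Wt y1 t"
      unfolding g_def m by (simp add: sum.cl_ivl_Suc)
    moreover have "(\<Sum>i=1..m. (real i - \<rho>) * Wt y1 i) \<ge> (\<Sum>i=1..m. - (\<rho> * exp (real m * y1)))"
    proof (rule sum_mono)
      fix i assume i: "i \<in> {1..m}"
      have "real i * y1 \<le> real m * y1" using i y1p by (intro mult_right_mono) auto
      then have "Wt y1 i \<le> exp (real m * y1)" using Wt_le_exp[of y1 i] by (smt (verit) exp_le_cancel_iff)
      then have "\<rho> * Wt y1 i \<le> \<rho> * exp (real m * y1)" using r by simp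
      moreover have "(real i - \<rho>) * Wt y1 i \<ge> - \<rho> * Wt y1 i" using Wt_pos[of y1 i] by (simp add: algebra_simps)
      ultimately show "- (\<rho> * exp (real m * y1)) \<le> (real i - \<rho>) * Wt y1 i" by linarith
    qed
    moreover have "(\<Sum>i=1..m. - (\<rho> * exp (real m * y1))) \<ge> - (real t * \<rho> * exp (real m * y1))"
      using r m by (simp add: mult_right_mono)
    moreover have "(real t - \<rho>) * Wt y1 t = exp (real m * y1) * ((real t - \<rho>) * exp y1 / dd t)"
      unfolding Wt_def m by (simp add: exp_add[symmetric] algebra_simps)
    moreover have "(real t - \<rho>) * exp y1 / dd t \<ge> real t * \<rho>"
    proof -
      have "(real t - \<rho>) * exp y1 = (real t - \<rho>) + real t * \<rho> * dd t" unfolding e1 using r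
        by (simp add: field_simps)
      then show ?thesis using r dd_pos[of t] by (simp add: le_divide_eq)
    qed
    ultimately have "g y1 \<ge> - (real t * \<rho> * exp (real m * y1)) + exp (real m * y1) * (real t * \<rho>)"
      by (smt (verit) exp_gt_zero mult_left_mono)
    then show ?thesis by (simp add: algebra_simps)
  qed
  have "y0 \<le> y1" using y0n y1p by simp
  from IVT'[of g y0 0 y1, OF g0 g1 this cont] show ?thesis unfolding g_def by blast
qed

lemma Pxy_unique:
  assumes t: "2 \<le> t" and r: "1 < \<rho>" "\<rho> < real t"
  shows "\<exists>!p. Pxy t \<rho> p"
proof -
  obtain y where y: "(\<Sum>i=1..t. (real i - \<rho>) * Wt y i) = 0" using key_exists[OF assms] by blast
  have ex: "Pxy t \<rho> (- ln (\<Sum>i=1..t. Wt y i), y)" using key_Pxy[OF y] t by simp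
  have uy: "y1 = y2" if "(\<Sum>i=1..t. (real i - \<rho>) * Wt y1 i) = 0" "(\<Sum>i=1..t. (real i - \<rho>) * Wt y2 i) = 0" for y1 y2
  proof -
    have M1: "(\<Sum>i=1..t. real i * Wt y1 i) = \<rho> * (\<Sum>i=1..t. Wt y1 i)" using that(1) using key_split[of \<rho> _ t] by simp
    have M2: "(\<Sum>i=1..t. real i * Wt y2 i) = \<rho> * (\<Sum>i=1..t. Wt y2 i)" using that(2) using key_split[of \<rho> _ t] by simp
    show ?thesis
    proof (rule ccontr)
      assume "y1 \<noteq> y2"
      then consider "y1 < y2" | "y2 < y1" by linarith
      then show False
      proof cases
        case 1 from cross_pos[OF t 1] show False unfolding M1 M2 by (simp add: algebra_simps)
      next
        case 2 from cross_pos[OF t 2] show False unfolding M1 M2 by (simp add: algebra_simps)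
      qed
    qed
  qed
  show ?thesis
  proof (rule ex1I[where P="Pxy t \<rho>", OF ex])
    fix p assume p: "Pxy t \<rho> p"
    obtain x' y' where p': "p = (x', y')" by (cases p)
    have ky: "(\<Sum>i=1..t. (real i - \<rho>) * Wt y' i) = 0" using Pxy_key p p' by blast
    then have "y' = y" using uy y by blast
    then have "exp x' * (\<Sum>i=1..t. Wt y i) = 1" using p p' Pxy_iff by blast
    then have "x' = - ln (\<Sum>i=1..t. Wt y i)"
      by (metis exp_gt_zero ln_exp ln_inverse mult.commute inverse_unique)
    then show "p = (- ln (\<Sum>i=1..t. Wt y i), y)" using p' \<open>y' = y\<close> by simp
  qed
qed

lemma y_t_key:
  assumes "2 \<le> t" "1 < \<rho>" "\<rho> < real t"
  shows "(\<Sum>i=1..t. (real i - \<rho>) * Wt (y_t t \<rho>) i) = 0"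
proof -
  have "xy t \<rho> = (THE p. Pxy t \<rho> p)" unfolding xy_def Pxy_def by simp
  then have "Pxy t \<rho> (xy t \<rho>)" using theI'[OF Pxy_unique[OF assms]] by simp
  then show ?thesis unfolding y_t_def using Pxy_key by (metis prod.collapse)
qed



lemma half_sum: "(\<Sum>k<m. real k / 2 ^ k) = 2 - 2 * (real m + 1) / 2 ^ m"
proof (induction m)
  case 0 then show ?case by simp
next
  case (Suc m)
  have "(\<Sum>k<Suc m. real k / 2 ^ k) = 2 - 2 * (real m + 1) / 2 ^ m + real m / 2 ^ m" using Suc by simp
  also have "\<dots> = 2 - 2 * (real (Suc m) + 1) / 2 ^ (Suc m)" by (simp add: field_simps)
  finally show ?case .
qed

lemma geo_bound:
  assumes r: "0 \<le> r" "r \<le> 1/2"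
  shows "(\<Sum>k<m. real k * r ^ k) \<le> 4 * r"
proof -
  have "(\<Sum>k<m. real k * r ^ k) \<le> (\<Sum>k<m. 2 * r * (real k / 2 ^ k))"
  proof (rule sum_mono)
    fix k assume "k \<in> {..<m}"
    show "real k * r ^ k \<le> 2 * r * (real k / 2 ^ k)"
    proof (cases k)
      case 0 then show ?thesis by simp
    next
      case (Suc j)
      have "r ^ j \<le> (1/2) ^ j" using r by (intro power_mono) auto
      then have "r ^ k \<le> r * (1/2)^j" using r Suc by (simp add: mult_left_mono)
      also have "\<dots> = 2 * r / 2 ^ k" using Suc by (simp add: power_divide)
      finally have "real k * r ^ k \<le> real k * (2 * r / 2 ^ k)" by (intro mult_left_mono) auto
      also have "\<dots> = 2 * r * (real k / 2 ^ k)" by (simp add: field_simps)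
      finally show ?thesis .
    qed
  qed
  also have "\<dots> = 2 * r * (\<Sum>k<m. real k / 2 ^ k)" by (simp add: sum_distrib_left)
  also have "\<dots> \<le> 2 * r * 2" unfolding half_sum using r by (intro mult_left_mono) auto
  finally show ?thesis by simp
qed

lemma rev_sum: fixes t :: nat shows "(\<Sum>i=1..t. f (t - i)) = (\<Sum>k<t. f k)"
  by (rule sum.reindex_bij_witness[where i="\<lambda>k. t - k" and j="\<lambda>i. t - i"]) auto

lemma sum_t_minus: fixes \<rho> y :: real
  assumes key: "(\<Sum>i=1..t. (real i - \<rho>) * Wt y i) = 0"
  shows "(\<Sum>i=1..t. (real t - real i) * Wt y i) = (real t - \<rho>) * (\<Sum>i=1..t. Wt y i)"
proof -
  have "(\<Sum>i=1..t. (real t - real i) * Wt y i) = (\<Sum>i=1..t. (real t - \<rho>) * Wt y i - (real i - \<rho>) * Wt y i)"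
    by (rule sum.cong) (auto simp: algebra_simps)
  also have "\<dots> = (real t - \<rho>) * (\<Sum>i=1..t. Wt y i)" using key by (simp add: sum_subtractf sum_distrib_left)
  finally show ?thesis .
qed

lemma R_upper:
  assumes t: "1 \<le> t" and c1: "0 < c1" "c1 \<le> real t - \<rho>"
    and key: "(\<Sum>i=1..t. (real i - \<rho>) * Wt y i) = 0"
  shows "exp y / (2 ^ (t - 1) * real t) \<le> max 2 (4 / c1)"
proof -
  define R where "R = exp y / (2 ^ (t - 1) * real t)"
  show ?thesis
  proof (cases "R \<le> 2")
    case True then show ?thesis unfolding R_def by simp
  next
    case False
    define r where "r = 1 / R"
    have Rp: "R > 2" using False by simp
    have r: "0 \<le> r" "r \<le> 1/2" using Rp unfolding r_def by (auto simp: field_simps)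
    have step: "Wt y i \<le> r * Wt y (Suc i)" if i: "1 \<le> i" "i < t" for i
    proof -
      have "(2::nat) ^ i * (i + 1) \<le> 2 ^ (t - 1) * t"
        using i by (intro mult_mono power_increasing) auto
      then have le: "(2::real) ^ i * (real i + 1) \<le> 2 ^ (t - 1) * real t"
        by (metis (mono_tags, opaque_lifting) of_nat_1 of_nat_add of_nat_le_iff of_nat_mult of_nat_numeral of_nat_power)
      have "R \<le> exp y / (2 ^ i * (real i + 1))" unfolding R_def
        by (rule divide_left_mono) (use le t in auto)
      then have "R * Wt y i \<le> (exp y / (2 ^ i * (real i + 1))) * Wt y i"
        using Wt_pos[of y i] by (intro mult_right_mono) auto
      then have "R * Wt y i \<le> Wt y (Suc i)" unfolding Wt_Suc by (simp add: mult.commute)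
      then show ?thesis unfolding r_def using Rp by (simp add: field_simps)
    qed
    have chain: "Wt y (t - k) \<le> r ^ k * Wt y t" if "k \<le> t - 1" for k
      using that
    proof (induction k)
      case 0 then show ?case by simp
    next
      case (Suc k)
      have "Suc (t - Suc k) = t - k" using Suc.prems by simp
      then have "Wt y (t - Suc k) \<le> r * Wt y (t - k)" using step[of "t - Suc k"] Suc.prems by simp
      also have "\<dots> \<le> r * (r ^ k * Wt y t)" using Suc r by (intro mult_left_mono) auto
      finally show ?case by simp
    qed
    have chain2: "Wt y i \<le> r ^ (t - i) * Wt y t" if "i \<in> {1..t}" for i
    proof -
      have "t - i \<le> t - 1" "t - (t - i) = i" using that by auto
      then show ?thesis using chain[of "t - i"] by simp
    qed
    have "c1 * Wt y t \<le> c1 * (\<Sum>i=1..t. Wt y i)"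
      using c1 t Wt_pos by (intro mult_left_mono member_le_sum) (auto intro: less_imp_le)
    also have "\<dots> \<le> (real t - \<rho>) * (\<Sum>i=1..t. Wt y i)"
      using c1 by (intro mult_right_mono sum_nonneg) (auto intro: less_imp_le Wt_pos)
    also have "\<dots> = (\<Sum>i=1..t. (real t - real i) * Wt y i)" using sum_t_minus[OF key] by simp
    also have "\<dots> \<le> (\<Sum>i=1..t. real (t - i) * (r ^ (t - i) * Wt y t))"
      using chain2 by (intro sum_mono) (auto simp: of_nat_diff intro: mult_left_mono)
    also have "\<dots> = (\<Sum>k<t. real k * (r ^ k * Wt y t))"
      using rev_sum[of "\<lambda>k. real k * (r ^ k * Wt y t)" t] by simp
    also have "\<dots> = (\<Sum>k<t. real k * r ^ k) * Wt y t" by (simp add: sum_distrib_right mult.assoc)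
    also have "\<dots> \<le> 4 * r * Wt y t" using geo_bound[OF r] Wt_pos[of y t] by (intro mult_right_mono) auto
    finally have "c1 \<le> 4 * r" using Wt_pos[of y t] by simp
    then have "R \<le> 4 / c1" unfolding r_def using c1 Rp by (simp add: field_simps)
    then show ?thesis unfolding R_def by simp
  qed
qed



lemma R_lower:
  assumes K: "1 \<le> K" "2 * K \<le> t" and Kc: "2 * \<bar>c2\<bar> < real K" and c2: "real t - \<rho> \<le> c2"
    and key: "(\<Sum>i=1..t. (real i - \<rho>) * Wt y i) = 0"
  shows "1 / (real K * 2 ^ (K + 1)) \<le> exp y / (2 ^ (t - 1) * real t)"
proof (rule ccontr)
  define R where "R = exp y / (2 ^ (t - 1) * real t)"
  define q where "q = R * 2 ^ (K + 1)"
  assume "\<not> ?thesis"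
  then have "R < 1 / (real K * 2 ^ (K + 1))" unfolding R_def by simp
  then have qK: "real K * q < 1" unfolding q_def using K by (simp add: field_simps)
  have tpos: "real t > 0" using K by simp
  have q0: "q > 0" unfolding q_def R_def using tpos by simp
  have q1: "q \<le> 1" using qK K q0
    by (smt (verit, best) mult_le_cancel_right1 of_nat_1 of_nat_le_iff)
  define a where "a = t - K"
  have a: "1 \<le> a" "a + K = t" "K \<le> a" unfolding a_def using K by auto
  have step: "Wt y (Suc i) \<le> q * Wt y i" if i: "a \<le> i" "i < t" for i
  proof -
    have "(2::nat) ^ (t - 1) \<le> 2 ^ (K + i)" using i a by (intro power_increasing) auto
    moreover have "t \<le> 2 * (i + 1)" using i a K by arith
    ultimately have "(2::nat) ^ (t - 1) * t \<le> 2 ^ (K + i) * (2 * (i + 1))" by (intro mult_mono) auto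
    also have "\<dots> = 2 ^ (K + 1) * (2 ^ i * (i + 1))" by (simp add: power_add algebra_simps)
    finally have le: "(2::real) ^ (t - 1) * real t \<le> 2 ^ (K + 1) * (2 ^ i * (real i + 1))"
      by (metis (mono_tags, opaque_lifting) of_nat_1 of_nat_add of_nat_le_iff of_nat_mult of_nat_numeral of_nat_power)
    have "exp y / (2 ^ i * (real i + 1)) = R * (2 ^ (t - 1) * real t) / (2 ^ i * (real i + 1))"
      unfolding R_def using tpos by simp
    also have "\<dots> \<le> R * (2 ^ (K + 1) * (2 ^ i * (real i + 1))) / (2 ^ i * (real i + 1))"
      using le by (intro divide_right_mono mult_left_mono) (auto simp: R_def)
    also have "\<dots> = q" unfolding q_def by simp
    finally have "exp y / (2 ^ i * (real i + 1)) \<le> q" .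
    then have "(exp y / (2 ^ i * (real i + 1))) * Wt y i \<le> q * Wt y i"
      using Wt_pos[of y i] by (intro mult_right_mono) auto
    then show ?thesis unfolding Wt_Suc by (simp add: mult.commute)
  qed
  have chain: "Wt y (a + d) \<le> q ^ d * Wt y a" if "a + d \<le> t" for d
    using that
  proof (induction d)
    case 0 then show ?case by simp
  next
    case (Suc d)
    have "Wt y (a + Suc d) \<le> q * Wt y (a + d)" using step[of "a + d"] Suc.prems by simp
    also have "\<dots> \<le> q * (q ^ d * Wt y a)" using Suc q0 by (intro mult_left_mono) auto
    finally show ?case by simp
  qed
  have top: "Wt y i \<le> q * Wt y a" if "i \<in> {a+1..t}" for i
  proof -
    have "a < i" using that by simp
    then obtain d where "i = Suc (a + d)" using less_imp_Suc_add by blast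
    then have d: "i = a + Suc d" by simp
    have "Wt y i \<le> q ^ Suc d * Wt y a" using chain[of "Suc d"] that d by simp
    also have "\<dots> \<le> q * Wt y a"
    proof -
      have "q ^ d \<le> 1" using q0 q1 by (simp add: power_le_one)
      then have "q ^ Suc d \<le> q" using q0 by (simp add: mult_left_le)
      then show ?thesis using Wt_pos[of y a] by (intro mult_right_mono) auto
    qed
    finally show ?thesis .
  qed
  define A where "A = (\<Sum>i=1..a. Wt y i)"
  define B where "B = (\<Sum>i=a+1..t. Wt y i)"
  have split: "(\<Sum>i=1..t. f i) = (\<Sum>i=1..a. f i) + (\<Sum>i=a+1..t. f i)" for f :: "nat \<Rightarrow> real"
  proof -
    have "{1..t} = {1..a} \<union> {a+1..t}" using a by auto
    then show ?thesis by (simp add: sum.union_disjoint)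
  qed
  have SA: "(\<Sum>i=1..t. Wt y i) = A + B" unfolding A_def B_def by (rule split)
  have Aa: "Wt y a \<le> A" unfolding A_def using a by (intro member_le_sum) (auto intro: less_imp_le Wt_pos)
  have Bq: "B \<le> real K * q * Wt y a"
  proof -
    have "B \<le> (\<Sum>i=a+1..t. q * Wt y a)" unfolding B_def using top by (intro sum_mono) auto
    also have "\<dots> = real K * q * Wt y a" using a by simp
    finally show ?thesis .
  qed
  have B0: "B \<ge> 0" unfolding B_def by (intro sum_nonneg) (auto intro: less_imp_le Wt_pos)
  have Apos: "A > 0" using Aa Wt_pos[of y a] by linarith
  have "B \<le> A" using Bq Aa qK Wt_pos[of y a]
    by (smt (verit, ccfv_SIG) mult_le_cancel_right1)
  have "real K * A = (\<Sum>i=1..a. real K * Wt y i)" unfolding A_def by (simp add: sum_distrib_left)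
  also have "\<dots> \<le> (\<Sum>i=1..a. (real t - real i) * Wt y i)"
    using a Wt_pos by (intro sum_mono mult_right_mono) (auto intro: less_imp_le)
  also have "\<dots> \<le> (\<Sum>i=1..a. (real t - real i) * Wt y i) + (\<Sum>i=a+1..t. (real t - real i) * Wt y i)"
    using Wt_pos by (smt (verit, best) atLeastAtMost_iff mult_nonneg_nonneg of_nat_mono sum_nonneg less_imp_le)
  also have "\<dots> = (real t - \<rho>) * (A + B)" using sum_t_minus[OF key] SA split by simp
  also have "\<dots> \<le> \<bar>c2\<bar> * (A + B)" using c2 Apos B0 by (intro mult_right_mono) auto
  also have "\<dots> \<le> \<bar>c2\<bar> * (2 * A)" using \<open>B \<le> A\<close> by (intro mult_left_mono) auto
  finally have "real K * A \<le> 2 * \<bar>c2\<bar> * A" by simp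
  then have "real K \<le> 2 * \<bar>c2\<bar>" using Apos by simp
  then show False using Kc by simp
qed



lemma alpha0_ln2:
  assumes "n \<ge> 2"
  shows "alpha0 n * ln 2 = 2 * ln (real n) - 2 * ln (ln (real n)) + (2 * ln (ln 2) + 2 * ln (exp 1 / 2) + ln 2)"
proof -
  have n: "real n > 1" using assms by simp
  have lnn: "ln (real n) > 0" using n by simp
  have l2: "ln (2::real) > 0" by simp
  have "log 2 (log 2 (real n)) * ln 2 = ln (ln (real n) / ln 2)"
    by (simp add: log_def)
  also have "\<dots> = ln (ln (real n)) - ln (ln 2)" using lnn l2 by (simp add: ln_div)
  finally have a: "log 2 (log 2 (real n)) * ln 2 = ln (ln (real n)) - ln (ln 2)" .
  have b: "log 2 (real n) * ln 2 = ln (real n)" by (simp add: log_def)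
  have c: "log 2 (exp 1 / 2) * ln 2 = ln (exp 1 / 2)" by (simp add: log_def)
  show ?thesis unfolding alpha0_def using a b c by (simp add: algebra_simps)
qed

lemma alpha0_lim: "((\<lambda>n. alpha0 n / ln (real n)) \<longlongrightarrow> 2 / ln 2) sequentially"
proof -
  have "((\<lambda>n. alpha0 n / ln (real n)) \<longlongrightarrow> 2 * inverse (ln 2)) sequentially"
    unfolding alpha0_def by real_asymp
  then show ?thesis by (simp add: divide_inverse)
qed

lemma alpha0_top: "filterlim alpha0 at_top sequentially"
  unfolding alpha0_def by real_asymp

lemma asym:
  fixes t :: "nat \<Rightarrow> nat"
  assumes C: "\<forall>\<^sub>F n in sequentially. \<bar>real (t n) - alpha0 n\<bar> \<le> C"
  shows "\<exists>Ka. \<forall>\<^sub>F n in sequentially.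
     \<bar>(real (t n) - 1) * ln 2 + ln (real (t n)) - (2 * ln (real n) - ln (ln (real n)))\<bar> \<le> Ka"
proof -
  define c0 where "c0 = 2 * ln (ln 2) + 2 * ln (exp 1 / 2) + ln (2::real)"
  have l1: "((\<lambda>n. (alpha0 n - C) / ln (real n)) \<longlongrightarrow> 2 / ln 2) sequentially"
  proof -
    have "((\<lambda>n. alpha0 n / ln (real n) - C / ln (real n)) \<longlongrightarrow> 2 / ln 2 - 0) sequentially"
      by (intro tendsto_diff alpha0_lim) real_asymp
    then show ?thesis by (simp add: diff_divide_distrib)
  qed
  have l2: "((\<lambda>n. (alpha0 n + C) / ln (real n)) \<longlongrightarrow> 2 / ln 2) sequentially"
  proof -
    have "((\<lambda>n. alpha0 n / ln (real n) + C / ln (real n)) \<longlongrightarrow> 2 / ln 2 + 0) sequentially"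
      by (intro tendsto_add alpha0_lim) real_asymp
    then show ?thesis by (simp add: add_divide_distrib)
  qed
  have ln2: "ln (2::real) > 0" by simp
  have "1 / ln 2 < 2 / ln (2::real)" using ln2 by (simp add: divide_strict_right_mono)
  then have e1: "\<forall>\<^sub>F n in sequentially. (alpha0 n - C) / ln (real n) > 1 / ln 2"
    using order_tendstoD(1)[OF l1] by blast
  have "3 / ln 2 > 2 / ln (2::real)" using ln2 by (simp add: divide_strict_right_mono)
  then have e2: "\<forall>\<^sub>F n in sequentially. (alpha0 n + C) / ln (real n) < 3 / ln 2"
    using order_tendstoD(2)[OF l2] by blast
  have e3: "\<forall>\<^sub>F n in sequentially. n \<ge> 3" by (rule eventually_ge_at_top)
  define Ka where "Ka = \<bar>C\<bar> * ln 2 + \<bar>c0\<bar> + ln 2 + \<bar>ln (ln 2)\<bar> + ln 3"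
  have "\<forall>\<^sub>F n in sequentially.
     \<bar>(real (t n) - 1) * ln 2 + ln (real (t n)) - (2 * ln (real n) - ln (ln (real n)))\<bar> \<le> Ka"
    using C e1 e2 e3
  proof eventually_elim
    case (elim n)
    have n: "real n \<ge> 3" using elim by simp
    have lnn: "ln (real n) > 0" using n by simp
    have A: "alpha0 n * ln 2 = 2 * ln (real n) - 2 * ln (ln (real n)) + c0"
      unfolding c0_def using alpha0_ln2[of n] elim by simp
    have lo: "real (t n) / ln (real n) > 1 / ln 2"
    proof -
      have "(alpha0 n - C) / ln (real n) \<le> real (t n) / ln (real n)"
        using elim lnn by (intro divide_right_mono) auto
      then show ?thesis using elim by linarith
    qed
    have hi: "real (t n) / ln (real n) < 3 / ln 2"
    proof -
      have "real (t n) / ln (real n) \<le> (alpha0 n + C) / ln (real n)"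
        using elim lnn by (intro divide_right_mono) auto
      then show ?thesis using elim by linarith
    qed
    have tpos: "real (t n) > 0" using lo lnn ln2
      by (smt (verit) divide_nonpos_pos divide_pos_pos)
    have L: "ln (real (t n)) - ln (ln (real n)) = ln (real (t n) / ln (real n))"
      using tpos lnn by (simp add: ln_div)
    have L1: "ln (real (t n) / ln (real n)) \<ge> - ln (ln 2)"
    proof -
      have "ln (1 / ln 2) \<le> ln (real (t n) / ln (real n))" using lo ln2 by (intro ln_mono) auto
      then show ?thesis using ln2 by (simp add: ln_div)
    qed
    have L2: "ln (real (t n) / ln (real n)) \<le> ln 3 - ln (ln 2)"
    proof -
      have "ln (real (t n) / ln (real n)) \<le> ln (3 / ln 2)" using hi tpos lnn by (intro ln_mono) auto
      then show ?thesis using ln2 by (simp add: ln_div)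
    qed
    have T: "\<bar>(real (t n) - alpha0 n) * ln 2\<bar> \<le> \<bar>C\<bar> * ln 2"
      using elim ln2 by (simp add: abs_mult mult_right_mono)
    have eq: "(real (t n) - 1) * ln 2 + ln (real (t n)) - (2 * ln (real n) - ln (ln (real n)))
       = (real (t n) - alpha0 n) * ln 2 + c0 - ln 2 + (ln (real (t n)) - ln (ln (real n)))"
      using A by (simp add: algebra_simps)
    have l3: "ln (3::real) \<ge> 0" by simp
    show ?case unfolding eq L Ka_def using T L1 L2 l3 ln2 by linarith
  qed
  then show ?thesis by blast
qed

lemma t_top:
  fixes t :: "nat \<Rightarrow> nat"
  assumes C: "\<forall>\<^sub>F n in sequentially. \<bar>real (t n) - alpha0 n\<bar> \<le> C"
  shows "\<forall>\<^sub>F n in sequentially. t n \<ge> N"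
proof -
  have "\<forall>\<^sub>F n in sequentially. alpha0 n \<ge> real N + C"
    using alpha0_top by (simp add: filterlim_at_top)
  with C show ?thesis by eventually_elim auto
qed


theorem corollary38:
  fixes t :: "nat \<Rightarrow> nat"
  assumes "\<exists>C. \<forall>\<^sub>F n in sequentially. \<bar>real (t n) - alpha0 n\<bar> \<le> C"
  shows "\<forall>c1 c2. 0 < c1 \<longrightarrow> (\<exists>K. \<forall>\<^sub>F n in sequentially. \<forall>\<rho>::real.
            2 \<le> \<rho> \<and> c1 \<le> real (t n) - \<rho> \<and> real (t n) - \<rho> \<le> c2 \<longrightarrow>
            \<bar>y_t (t n) \<rho> - (2 * ln (real n) - ln (ln (real n)))\<bar> \<le> K)"
proof (intro allI impI)
  fix c1 c2 :: real
  assume c1: "0 < c1"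
  obtain C where C: "\<forall>\<^sub>F n in sequentially. \<bar>real (t n) - alpha0 n\<bar> \<le> C" using assms by blast
  obtain Ka where Ka: "\<forall>\<^sub>F n in sequentially.
     \<bar>(real (t n) - 1) * ln 2 + ln (real (t n)) - (2 * ln (real n) - ln (ln (real n)))\<bar> \<le> Ka"
    using asym[OF C] by blast
  define K :: nat where "K = nat \<lceil>2 * \<bar>c2\<bar>\<rceil> + 1"
  have K1: "1 \<le> K" unfolding K_def by simp
  have Kc: "2 * \<bar>c2\<bar> < real K" unfolding K_def by linarith
  define lo where "lo = 1 / (real K * 2 ^ (K + 1))"
  define hi where "hi = max 2 (4 / c1)"
  have lo0: "lo > 0" unfolding lo_def using K1 by simp
  have hi0: "hi > 0" unfolding hi_def by simp
  define B where "B = Ka + \<bar>ln lo\<bar> + \<bar>ln hi\<bar>"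
  have "\<forall>\<^sub>F n in sequentially. \<forall>\<rho>::real.
            2 \<le> \<rho> \<and> c1 \<le> real (t n) - \<rho> \<and> real (t n) - \<rho> \<le> c2 \<longrightarrow>
            \<bar>y_t (t n) \<rho> - (2 * ln (real n) - ln (ln (real n)))\<bar> \<le> B"
    using Ka t_top[OF C, of "2 * K"]
  proof eventually_elim
    case (elim n)
    show ?case
    proof (intro allI impI)
      fix \<rho> :: real
      assume r: "2 \<le> \<rho> \<and> c1 \<le> real (t n) - \<rho> \<and> real (t n) - \<rho> \<le> c2"
      define tt where "tt = t n"
      define y where "y = y_t tt \<rho>"
      have tt2: "2 \<le> tt" "2 * K \<le> tt" using elim K1 unfolding tt_def by auto
      have key: "(\<Sum>i=1..tt. (real i - \<rho>) * Wt y i) = 0"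
        unfolding y_def using y_t_key[of tt \<rho>] tt2 r c1 unfolding tt_def by simp
      have up: "exp y / (2 ^ (tt - 1) * real tt) \<le> hi"
        unfolding hi_def using R_upper[of tt c1 \<rho> y] tt2 c1 r key unfolding tt_def by simp
      have low: "lo \<le> exp y / (2 ^ (tt - 1) * real tt)"
        unfolding lo_def using R_lower[of K tt c2 \<rho> y] K1 tt2 Kc r key unfolding tt_def by simp
      define R where "R = exp y / (2 ^ (tt - 1) * real tt)"
      have ttp: "real tt > 0" using tt2 by simp
      have yR: "y = ln R + (real tt - 1) * ln 2 + ln (real tt)"
      proof -
        have Rp: "R > 0" unfolding R_def using ttp by simp
        have "exp y = R * (2 ^ (tt - 1) * real tt)" unfolding R_def using ttp by simp
        then have "y = ln (R * (2 ^ (tt - 1) * real tt))" by (metis ln_exp)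
        also have "\<dots> = ln R + ln (2 ^ (tt - 1)) + ln (real tt)" using Rp ttp by (simp add: ln_mult)
        also have "ln ((2::real) ^ (tt - 1)) = (real tt - 1) * ln 2" using tt2 by (simp add: ln_realpow of_nat_diff)
        finally show ?thesis .
      qed
      have lnR: "\<bar>ln R\<bar> \<le> \<bar>ln lo\<bar> + \<bar>ln hi\<bar>"
      proof -
        have "ln lo \<le> ln R" using low lo0 unfolding R_def by simp
        moreover have "ln R \<le> ln hi" using up lo0 low unfolding R_def by (simp add: ln_le_cancel_iff)
        ultimately show ?thesis by linarith
      qed
      have "\<bar>y - (2 * ln (real n) - ln (ln (real n)))\<bar> \<le> B"
        unfolding B_def yR using lnR elim unfolding tt_def by linarith
      then show "\<bar>y_t (t n) \<rho> - (2 * ln (real n) - ln (ln (real n)))\<bar> \<le> B" unfolding y_def tt_def .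
    qed
  qed
  then show "\<exists>K. \<forall>\<^sub>F n in sequentially. \<forall>\<rho>::real.
            2 \<le> \<rho> \<and> c1 \<le> real (t n) - \<rho> \<and> real (t n) - \<rho> \<le> c2 \<longrightarrow>
            \<bar>y_t (t n) \<rho> - (2 * ln (real n) - ln (ln (real n)))\<bar> \<le> K" by blast
qed

end
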